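(* For every integer $m\ge4$, \[ \sum_{n=1}^{\infty}\frac{h_n^{(3)}}{n^{m}}=\sum_{n=1}^{\infty}h_n^{(2)}\zeta(m,n)=\tfrac12\zeta_H(m-2)+\tfrac32\zeta_H(m-1)+\zeta_H(m)-\tfrac54\zeta(m-1)-\tfrac34\zeta(m-2). \]
   Context: Hyperharmonic numbers: $h_n^{(0)}=1/n$ for $n\ge1$, and for $r\ge1$, $h_n^{(r)}=\sum_{j=1}^{n}h_j^{(r-1)}$. $H_n=\sum_{j=1}^n 1/j$. $\zeta$ is the Riemann zeta function, $\zeta(s,a)=\sum_{j=0}^\infty (j+a)^{-s}$ the Hurwitz zeta function, and $\zeta_H(s)=\sum_{n=1}^{\infty}H_n/n^{s}$ for integers $s\ge2$. *)

theory Defs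
  imports "HOL-Analysis.Analysis"
begin

text \<open>Hyperharmonic numbers h_n^(r): h_n^(0) = 1/n (n >= 1), h_n^(r) = sum_{j=1}^n h_j^(r-1).
  Only values with n >= 1 are used; for n = 0 we get h_0^(0) = 0 (inverse 0 = 0).\<close>
fun hyperharm :: "nat \<Rightarrow> nat \<Rightarrow> real" where
  "hyperharm 0 n = inverse (real n)"
| "hyperharm (Suc r) n = (\<Sum>j=1..n. hyperharm r j)"

definition zeta_int :: "nat \<Rightarrow> real" where
  "zeta_int s = (\<Sum>n. 1 / real (n + 1) ^ s)"

definition hurwitz_zeta_int :: "nat \<Rightarrow> real \<Rightarrow> real" where
  "hurwitz_zeta_int s a = (\<Sum>j. 1 / (real j + a) ^ s)"

definition zetaH :: "nat \<Rightarrow> real" where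
  "zetaH s = (\<Sum>n. harm (n + 1) / real (n + 1) ^ s)"

end

theory Submission
  imports Defs
begin

lemma hh_Suc: "hyperharm (Suc r) (Suc n) = hyperharm (Suc r) n + hyperharm r (Suc n)"
  by simp

lemma h1: "hyperharm 1 n = harm n"
  by (simp add: harm_def)

lemma h2: "hyperharm 2 n = (real n + 1) * harm n - real n"
proof (induction n)
  case 0 then show ?case by (simp add: harm_def numeral_2_eq_2)
next
  case (Suc n)
  have "hyperharm 2 (Suc n) = hyperharm 2 n + hyperharm 1 (Suc n)"
    unfolding numeral_2_eq_2 One_nat_def by (rule hh_Suc)
  also have "\<dots> = (real n + 1) * harm n - real n + (harm n + inverse (real (Suc n)))"
    unfolding h1 Suc.IH harm_Suc ..
  also have "\<dots> = (real n + 1) * harm n - real n + harm n + 1/(real n + 1)"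
    by (simp add: inverse_eq_divide)
  also have "\<dots> = (real (Suc n) + 1) * harm (Suc n) - real (Suc n)"
    by (simp add: harm_Suc field_simps)
  finally show ?case .
qed

lemma h3: "hyperharm 3 n = (real n + 1) * (real n + 2) / 2 * harm n - 3/4 * real n ^ 2 - 5/4 * real n"
proof (induction n)
  case 0 then show ?case by (simp add: harm_def numeral_3_eq_3)
next
  case (Suc n)
  have "hyperharm 3 (Suc n) = hyperharm 3 n + hyperharm 2 (Suc n)"
    unfolding numeral_3_eq_3 numeral_2_eq_2 by (rule hh_Suc)
  also have "\<dots> = (real n + 1) * (real n + 2) / 2 * harm n - 3/4 * real n ^ 2 - 5/4 * real n
       + ((real (Suc n) + 1) * (harm n + inverse (real (Suc n))) - real (Suc n))"
    unfolding h2 Suc.IH harm_Suc ..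
  also have "\<dots> = (real n + 1) * (real n + 2) / 2 * harm n - 3/4 * real n ^ 2 - 5/4 * real n
       + ((real n + 2) * (harm n + 1/(real n + 1)) - (real n + 1))"
    by (simp add: inverse_eq_divide add.commute)
  also have "\<dots> = (real (Suc n) + 1) * (real (Suc n) + 2) / 2 * harm (Suc n) - 3/4 * real (Suc n) ^ 2 - 5/4 * real (Suc n)"
    by (simp add: harm_Suc field_simps power2_eq_square)
  finally show ?case .
qed

lemma harm_sqrt: "harm n \<le> 2 * sqrt (real n)"
proof (induction n)
  case 0 then show ?case by (simp add: harm_def)
next
  case (Suc n)
  define a where "a = sqrt (real n)"
  define b where "b = sqrt (real n + 1)"
  have a0: "a \<ge> 0" and b1: "b \<ge> 1" using a_def b_def by auto
  have ab: "b^2 = a^2 + 1" by (simp add: a_def b_def)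
  have "1 / (real n + 1) \<le> 1 / b" 
  proof -
    have "b \<le> b^2" using b1 by (simp add: power2_eq_square)
    then show ?thesis using b1 by (simp add: b_def frac_le)
  qed
  also have "1 / b \<le> 2 * (b - a)"
  proof -
    have "a \<le> b" using ab a0 b1 by (smt (verit) power_mono)
    have "(b - a) * (b + a) = 1" using ab by (simp add: algebra_simps power2_eq_square)
    hence "1 \<le> (b - a) * (2*b)" using \<open>a \<le> b\<close> a0 by (smt (verit) mult_left_mono)
    thus ?thesis using b1 by (simp add: field_simps)
  qed
  finally have "harm (Suc n) \<le> 2 * a + 2 * (b - a)"
    using Suc by (simp add: harm_Suc a_def inverse_eq_divide add.commute)
  then show ?case by (simp add: b_def add.commute)
qed

lemma zeta_summable: "s \<ge> 2 \<Longrightarrow> summable (\<lambda>n. 1 / real (n + 1) ^ s)"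
proof -
  assume "s \<ge> 2"
  hence "summable (\<lambda>n. 1 / real n ^ s)"
    using inverse_power_summable[of s, where 'a=real] by (simp add: inverse_eq_divide)
  from summable_Suc_iff[THEN iffD2, OF this] show ?thesis by simp
qed

lemma zetaH_summable:
  assumes "s \<ge> 2" shows "summable (\<lambda>n. harm (n + 1) / real (n + 1) ^ s)"
proof (rule summable_comparison_test[where g="\<lambda>n. 2 * real (Suc n) powr (-3/2)"])
  have "summable (\<lambda>n. real n powr (-3/2))" by (simp add: summable_real_powr_iff)
  hence "summable (\<lambda>n. real (Suc n) powr (-3/2))" by (subst summable_Suc_iff)
  thus "summable (\<lambda>n. 2 * real (Suc n) powr (-3/2))" by (rule summable_mult)
  show "\<exists>N. \<forall>n\<ge>N. norm (harm (n + 1) / real (n + 1) ^ s) \<le> 2 * real (Suc n) powr (-3/2)"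
  proof (intro exI allI impI)
    fix n :: nat
    define x where "x = real (Suc n)"
    have x1: "x \<ge> 1" by (simp add: x_def)
    have "harm (n+1) / real (n+1) ^ s \<le> 2 * sqrt x / x ^ 2"
    proof -
      have "x^2 \<le> x^s" using x1 assms by (simp add: power_increasing)
      have "harm (n+1) / x ^ s \<le> harm (n+1) / x^2"
        using \<open>x^2 \<le> x^s\<close> x1 by (intro divide_left_mono) (auto simp: harm_nonneg)
      also have "\<dots> \<le> 2 * sqrt x / x^2"
        using harm_sqrt[of "n+1"] x1 by (intro divide_right_mono) (auto simp: x_def)
      finally show ?thesis by (simp add: x_def)
    qed
    also have "2 * sqrt x / x ^ 2 = 2 * x powr (-3/2)"
    proof -
      have "x powr (-3/2) = x powr (1/2 - 2)" by simp
      also have "\<dots> = x powr (1/2) / x powr 2" by (rule powr_diff)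
      also have "\<dots> = sqrt x / x^2"
        using x1 by (simp add: powr_half_sqrt powr_numeral)
      finally show ?thesis by simp
    qed
    finally show "norm (harm (n + 1) / real (n + 1) ^ s) \<le> 2 * real (Suc n) powr (-3/2)"
      by (simp add: x_def harm_nonneg)
  qed
qed

lemma hh_nonneg: "hyperharm r n \<ge> 0"
  by (induction r arbitrary: n) (auto intro: sum_nonneg)

lemma zetaH_sums: "s \<ge> 2 \<Longrightarrow> (\<lambda>n. harm (n + 1) / real (n + 1) ^ s) sums zetaH s"
  unfolding zetaH_def by (rule summable_sums, rule zetaH_summable)

lemma zeta_sums: "s \<ge> 2 \<Longrightarrow> (\<lambda>n. 1 / real (n + 1) ^ s) sums zeta_int s"
  unfolding zeta_int_def by (rule summable_sums, rule zeta_summable)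

lemma part1:
  fixes m :: nat
  assumes "m \<ge> 4"
  shows "(\<lambda>n. hyperharm 3 (n + 1) / real (n + 1) ^ m) sums
           (1/2 * zetaH (m - 2) + 3/2 * zetaH (m - 1) + zetaH m
            - 5/4 * zeta_int (m - 1) - 3/4 * zeta_int (m - 2))"
proof -
  define k where "k = m - 2"
  have mk: "m = k + 2" and k2: "k \<ge> 2" using assms by (auto simp: k_def)
  have eq: "hyperharm 3 (n + 1) / real (n + 1) ^ m =
     1/2 * (harm (n + 1) / real (n + 1) ^ k) + 3/2 * (harm (n + 1) / real (n + 1) ^ (k+1))
     + harm (n + 1) / real (n + 1) ^ m - 5/4 * (1 / real (n + 1) ^ (k+1)) - 3/4 * (1 / real (n + 1) ^ k)"
    for n
  proof -
    define x where "x = real (n + 1)"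
    define H :: real where "H = harm (n + 1)"
    have x0: "x > 0" by (simp add: x_def)
    have "hyperharm 3 (n + 1) = (x + 1) * (x + 2) / 2 * H - 3/4 * x^2 - 5/4 * x"
      unfolding h3 x_def H_def by simp
    hence "hyperharm 3 (n + 1) / real (n + 1) ^ m = ((x + 1) * (x + 2) / 2 * H - 3/4 * x^2 - 5/4 * x) / x^(k+2)"
      by (simp add: x_def mk)
    also have "\<dots> = 1/2 * (H / x ^ k) + 3/2 * (H / x ^ (k+1))
     + H / x ^ (k+2) - 5/4 * (1 / x ^ (k+1)) - 3/4 * (1 / x ^ k)"
      using x0 by (simp add: field_simps power_add power2_eq_square)
    finally show ?thesis by (simp add: x_def H_def mk)
  qed
  have "(\<lambda>n. 1/2 * (harm (n + 1) / real (n + 1) ^ k) + 3/2 * (harm (n + 1) / real (n + 1) ^ (k+1))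
     + harm (n + 1) / real (n + 1) ^ m - 5/4 * (1 / real (n + 1) ^ (k+1)) - 3/4 * (1 / real (n + 1) ^ k))
     sums (1/2 * zetaH k + 3/2 * zetaH (k+1) + zetaH m - 5/4 * zeta_int (k+1) - 3/4 * zeta_int k)"
    using k2 mk
    by (intro sums_diff sums_add sums_mult zetaH_sums zeta_sums) auto
  moreover have "m - 2 = k" "m - 1 = k + 1" using mk by auto
  ultimately show ?thesis by (simp only: eq)
qed


lemma part2:
  fixes m :: nat and L :: real
  assumes m2: "m \<ge> 2"
  assumes p1: "(\<lambda>n. hyperharm 3 (n + 1) / real (n + 1) ^ m) sums L"
  shows "(\<lambda>n. hyperharm 2 (n + 1) * hurwitz_zeta_int m (real (n + 1))) sums L"
proof -
  define F :: "nat \<times> nat \<Rightarrow> real" where "F = (\<lambda>(k,n). hyperharm 2 (n+1) / real (k+1) ^ m)"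
  have A: "((\<lambda>n. F (k, n)) has_sum (hyperharm 3 (k+1) / real (k+1) ^ m)) {..k}" for k
  proof -
    have "hyperharm 3 (k+1) = (\<Sum>j=Suc 0..Suc k. hyperharm 2 j)"
      by (simp add: numeral_3_eq_3 numeral_2_eq_2)
    also have "\<dots> = (\<Sum>n=0..k. hyperharm 2 (Suc n))"
      by (rule sum.shift_bounds_cl_Suc_ivl)
    also have "\<dots> = (\<Sum>n\<le>k. hyperharm 2 (n+1))" by (simp add: atLeast0AtMost)
    finally have "hyperharm 3 (k+1) / real (k+1) ^ m = (\<Sum>n\<le>k. F (k, n))"
      by (simp add: F_def sum_divide_distrib)
    thus ?thesis using has_sum_finite[of "{..k}" "\<lambda>n. F (k, n)"] by simp
  qed
  have B: "((\<lambda>k. hyperharm 3 (k+1) / real (k+1) ^ m) has_sum L) UNIV"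
    using p1 by (rule sums_nonneg_imp_has_sum) (simp add: hh_nonneg)
  have Fnn: "F x \<ge> 0" for x by (auto simp: F_def hh_nonneg split: prod.splits)
  have "F summable_on Sigma UNIV (\<lambda>k. {..k})"
    using A B Fnn by (intro summable_on_SigmaI[where g="\<lambda>k. hyperharm 3 (k+1) / real (k+1) ^ m"])
       (auto dest: has_sum_imp_summable)
  hence C: "(F has_sum L) (Sigma UNIV (\<lambda>k. {..k}))"
    using A B by (intro has_sum_SigmaI) auto
  have bij: "bij_betw (\<lambda>(n,k). (k,n)) (Sigma UNIV (\<lambda>n. {n..})) (Sigma UNIV (\<lambda>k. {..k}))"
    by (rule bij_betwI[of _ _ _ "\<lambda>(k,n). (n,k)"]) auto
  have D: "((\<lambda>x. F ((\<lambda>(n,k). (k,n)) x)) has_sum L) (Sigma UNIV (\<lambda>n. {n..}))"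
    using has_sum_reindex_bij_betw[OF bij] C by blast
  have E: "((\<lambda>k. F ((\<lambda>(n,k). (k,n)) (n, k))) has_sum
            (hyperharm 2 (n + 1) * hurwitz_zeta_int m (real (n + 1)))) {n..}" for n
  proof -
    have "summable (\<lambda>j. 1 / real (j + n + 1) ^ m)"
      using summable_ignore_initial_segment[OF zeta_summable[OF m2], of n] by simp
    hence "(\<lambda>j. 1 / real (j + n + 1) ^ m) sums hurwitz_zeta_int m (real (n + 1))"
      unfolding hurwitz_zeta_int_def by (simp add: summable_sums ac_simps)
    hence "((\<lambda>j. 1 / real (j + n + 1) ^ m) has_sum hurwitz_zeta_int m (real (n + 1))) UNIV"
      by (rule sums_nonneg_imp_has_sum) simp
    moreover have "bij_betw (\<lambda>j. j + n) UNIV {n..}"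
      by (rule bij_betwI[of _ _ _ "\<lambda>k. k - n"]) auto
    ultimately have "((\<lambda>k. 1 / real (k + 1) ^ m) has_sum hurwitz_zeta_int m (real (n + 1))) {n..}"
      using has_sum_reindex_bij_betw[of "\<lambda>j. j + n" UNIV "{n..}" "\<lambda>k. 1 / real (k + 1) ^ m"]
      by simp
    from has_sum_cmult_right[OF this, of "hyperharm 2 (n + 1)"]
    show ?thesis by (simp add: F_def)
  qed
  have "((\<lambda>n. hyperharm 2 (n + 1) * hurwitz_zeta_int m (real (n + 1))) has_sum L) UNIV"
    by (rule has_sum_Sigma'[OF D E])
  thus ?thesis by (rule has_sum_imp_sums)
qed

theorem mainTheorem4:
  fixes m :: nat
  assumes "m \<ge> 4"
  shows "(\<lambda>n. hyperharm 3 (n + 1) / real (n + 1) ^ m) sums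
           (1/2 * zetaH (m - 2) + 3/2 * zetaH (m - 1) + zetaH m
            - 5/4 * zeta_int (m - 1) - 3/4 * zeta_int (m - 2))
       \<and> (\<lambda>n. hyperharm 2 (n + 1) * hurwitz_zeta_int m (real (n + 1))) sums
           (1/2 * zetaH (m - 2) + 3/2 * zetaH (m - 1) + zetaH m
            - 5/4 * zeta_int (m - 1) - 3/4 * zeta_int (m - 2))"
  using part1[OF assms] part2[OF _ part1[OF assms]] assms by auto

end
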